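(* Let $A,B$ be rings and $M$ a $(B,A)$-bimodule, and let $T=\begin{pmatrix} A & 0\\ M & B\end{pmatrix}$ be the formal triangular matrix ring. If $T$ is weakly $r$-clean, then $A$ and $B$ are weakly $r$-clean.
   Context: Rings are associative with identity. $T$ consists of matrices $\begin{pmatrix} a & 0\\ m & b\end{pmatrix}$ with $a\in A$, $b\in B$, $m\in M$, with matrix addition and multiplication. $Idem(R)$ denotes idempotents and $Reg(R)=\{r: r=ryr \text{ for some } y\in R\}$ regular elements. An element is weakly $r$-clean if it equals $r+e$ or $r-e$ with $r\in Reg(R)$, $e\in Idem(R)$; a ring is weakly $r$-clean if all its elements are. *)

theory Defs
  imports Main
begin

definition Idem_gen :: "('t \<Rightarrow> 't \<Rightarrow> 't) \<Rightarrow> 't set \<Rightarrow> 't set" where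
  "Idem_gen mult S = {e \<in> S. mult e e = e}"

definition Reg_gen :: "('t \<Rightarrow> 't \<Rightarrow> 't) \<Rightarrow> 't set \<Rightarrow> 't set" where
  "Reg_gen mult S = {r \<in> S. \<exists>y\<in>S. r = mult (mult r y) r}"

definition weakly_r_clean_gen ::
  "('t \<Rightarrow> 't \<Rightarrow> 't) \<Rightarrow> ('t \<Rightarrow> 't \<Rightarrow> 't) \<Rightarrow> ('t \<Rightarrow> 't \<Rightarrow> 't) \<Rightarrow> 't set \<Rightarrow> bool" where
  "weakly_r_clean_gen add sub mult S \<longleftrightarrow>
     (\<forall>x\<in>S. \<exists>r\<in>Reg_gen mult S. \<exists>e\<in>Idem_gen mult S. x = add r e \<or> x = sub r e)"

definition weakly_r_clean_ring :: "'a::ring_1 itself \<Rightarrow> bool" where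
  "weakly_r_clean_ring _ \<longleftrightarrow> weakly_r_clean_gen (+) (-) (*) (UNIV :: 'a set)"

definition bimodule :: "('b::ring_1 \<Rightarrow> 'm::ab_group_add \<Rightarrow> 'm) \<Rightarrow> ('m \<Rightarrow> 'a::ring_1 \<Rightarrow> 'm) \<Rightarrow> bool" where
  "bimodule lact ract \<longleftrightarrow>
     (\<forall>b m m'. lact b (m + m') = lact b m + lact b m') \<and>
     (\<forall>b b' m. lact (b + b') m = lact b m + lact b' m) \<and>
     (\<forall>b b' m. lact (b * b') m = lact b (lact b' m)) \<and>
     (\<forall>m. lact 1 m = m) \<and>
     (\<forall>a m m'. ract (m + m') a = ract m a + ract m' a) \<and>
     (\<forall>a a' m. ract m (a + a') = ract m a + ract m a') \<and>
     (\<forall>a a' m. ract m (a * a') = ract (ract m a) a') \<and>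
     (\<forall>m. ract m 1 = m) \<and>
     (\<forall>b m a. ract (lact b m) a = lact b (ract m a))"

text \<open>The formal triangular matrix ring T = [[A,0],[M,B]]; the matrix [[a,0],[m,b]] is
represented by the triple (a, m, b).\<close>
definition tri_add :: "'a::ring_1 \<times> 'm::ab_group_add \<times> 'b::ring_1 \<Rightarrow> 'a \<times> 'm \<times> 'b \<Rightarrow> 'a \<times> 'm \<times> 'b" where
  "tri_add x y = (case x of (a, m, b) \<Rightarrow> case y of (a', m', b') \<Rightarrow> (a + a', m + m', b + b'))"

definition tri_sub :: "'a::ring_1 \<times> 'm::ab_group_add \<times> 'b::ring_1 \<Rightarrow> 'a \<times> 'm \<times> 'b \<Rightarrow> 'a \<times> 'm \<times> 'b" where
  "tri_sub x y = (case x of (a, m, b) \<Rightarrow> case y of (a', m', b') \<Rightarrow> (a - a', m - m', b - b'))"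

text \<open>[[a,0],[m,b]] * [[a',0],[m',b']] = [[a a', 0],[m a' + b m', b b']].\<close>
definition tri_mult :: "('b::ring_1 \<Rightarrow> 'm::ab_group_add \<Rightarrow> 'm) \<Rightarrow> ('m \<Rightarrow> 'a::ring_1 \<Rightarrow> 'm) \<Rightarrow>
    'a \<times> 'm \<times> 'b \<Rightarrow> 'a \<times> 'm \<times> 'b \<Rightarrow> 'a \<times> 'm \<times> 'b" where
  "tri_mult lact ract x y = (case x of (a, m, b) \<Rightarrow> case y of (a', m', b') \<Rightarrow>
      (a * a', ract m a' + lact b m', b * b'))"

definition tri_weakly_r_clean :: "('b::ring_1 \<Rightarrow> 'm::ab_group_add \<Rightarrow> 'm) \<Rightarrow> ('m \<Rightarrow> 'a::ring_1 \<Rightarrow> 'm) \<Rightarrow> bool" where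
  "tri_weakly_r_clean lact ract \<longleftrightarrow>
     weakly_r_clean_gen tri_add tri_sub (tri_mult lact ract) (UNIV :: ('a \<times> 'm \<times> 'b) set)"

end

theory Submission
  imports Defs
begin

lemma tri_reg_fst:
  assumes "(r1, rm, r3) \<in> Reg_gen (tri_mult lact ract) UNIV"
  shows "r1 \<in> Reg_gen (*) UNIV \<and> r3 \<in> Reg_gen (*) UNIV"
proof -
  from assms obtain y where y: "(r1, rm, r3) = tri_mult lact ract (tri_mult lact ract (r1, rm, r3) y) (r1, rm, r3)"
    unfolding Reg_gen_def by auto
  obtain y1 ym y3 where "y = (y1, ym, y3)" by (cases y) auto
  with y have "r1 = r1 * y1 * r1" "r3 = r3 * y3 * r3" by (auto simp: tri_mult_def)
  thus ?thesis unfolding Reg_gen_def by auto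
qed

lemma tri_idem:
  assumes "(e1, em, e3) \<in> Idem_gen (tri_mult lact ract) UNIV"
  shows "e1 \<in> Idem_gen (*) UNIV \<and> e3 \<in> Idem_gen (*) UNIV"
  using assms unfolding Idem_gen_def by (auto simp: tri_mult_def)

theorem proposition2p16:
  fixes lact :: "'b::ring_1 \<Rightarrow> 'm::ab_group_add \<Rightarrow> 'm"
    and ract :: "'m \<Rightarrow> 'a::ring_1 \<Rightarrow> 'm"
  assumes "bimodule lact ract"
    and "tri_weakly_r_clean lact ract"
  shows "weakly_r_clean_ring TYPE('a) \<and> weakly_r_clean_ring TYPE('b)"
proof
  have H: "\<And>x. \<exists>r\<in>Reg_gen (tri_mult lact ract) UNIV. \<exists>e\<in>Idem_gen (tri_mult lact ract) UNIV.
      x = tri_add r e \<or> x = tri_sub r e"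
    using assms(2) unfolding tri_weakly_r_clean_def weakly_r_clean_gen_def by blast
  show "weakly_r_clean_ring TYPE('a)"
    unfolding weakly_r_clean_ring_def weakly_r_clean_gen_def
  proof
    fix a :: 'a
    obtain r e where r: "r \<in> Reg_gen (tri_mult lact ract) UNIV" and e: "e \<in> Idem_gen (tri_mult lact ract) UNIV"
      and d: "(a, 0::'m, 0::'b) = tri_add r e \<or> (a, 0::'m, 0::'b) = tri_sub r e"
      using H[of "(a, 0, 0)"] by blast
    obtain r1 rm r3 where rr: "r = (r1, rm, r3)" by (cases r) auto
    obtain e1 em e3 where ee: "e = (e1, em, e3)" by (cases e) auto
    have "r1 \<in> Reg_gen (*) UNIV" using tri_reg_fst r rr by blast
    moreover have "e1 \<in> Idem_gen (*) UNIV" using tri_idem e ee by blast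
    moreover have "a = r1 + e1 \<or> a = r1 - e1" using d rr ee by (auto simp: tri_add_def tri_sub_def)
    ultimately show "\<exists>r\<in>Reg_gen (*) UNIV. \<exists>e\<in>Idem_gen (*) UNIV. a = r + e \<or> a = r - e" by blast
  qed
  show "weakly_r_clean_ring TYPE('b)"
    unfolding weakly_r_clean_ring_def weakly_r_clean_gen_def
  proof
    fix b :: 'b
    obtain r e where r: "r \<in> Reg_gen (tri_mult lact ract) UNIV" and e: "e \<in> Idem_gen (tri_mult lact ract) UNIV"
      and d: "(0::'a, 0::'m, b) = tri_add r e \<or> (0::'a, 0::'m, b) = tri_sub r e"
      using H[of "(0, 0, b)"] by blast
    obtain r1 rm r3 where rr: "r = (r1, rm, r3)" by (cases r) auto
    obtain e1 em e3 where ee: "e = (e1, em, e3)" by (cases e) auto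
    have "r3 \<in> Reg_gen (*) UNIV" using tri_reg_fst r rr by blast
    moreover have "e3 \<in> Idem_gen (*) UNIV" using tri_idem e ee by blast
    moreover have "b = r3 + e3 \<or> b = r3 - e3" using d rr ee by (auto simp: tri_add_def tri_sub_def)
    ultimately show "\<exists>r\<in>Reg_gen (*) UNIV. \<exists>e\<in>Idem_gen (*) UNIV. b = r + e \<or> b = r - e" by blast
  qed
qed

end
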